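(* Let $k$ be a field, $n\ge2$, $d\ge2$, and $\mathbf{m}\in\mathbb{N}^n$ with $|\mathbf{m}|=d$ and $\max(\mathbf{m})<d$. Let $P=\mathcal{P}_{n,d,\mathbf{m}}$ and $V=V_{n,d}$. Then the cokernel $C=V/P$ of the inclusion $P\subseteq V$ is a cyclic $P$-module generated by the class $x_1^{m_1}\cdots x_n^{m_n}+P$.
   Context: Let $S=k[x_1,\dots,x_n]$. $T_{n,d}=\{\mathbf{a}\in\mathbb{N}^n:|\mathbf{a}|=d\}$ with $|\mathbf{a}|=\sum a_i$, $\max(\mathbf{a})=\max_i a_i$. $V_{n,d}\subseteq S$ is the $k$-subalgebra generated by all monomials of degree $d$ (the $d$th Veronese subring); $\mathcal{P}_{n,d,\mathbf{m}}\subseteq S$ is the $k$-subalgebra generated by all degree-$d$ monomials except $x_1^{m_1}\cdots x_n^{m_n}$ (the pinched Veronese ring). *)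

theory Defs
  imports "HOL-Library.Poly_Mapping"
begin

text \<open>Polynomials over a field k: finitely supported maps from monomials (exponent vectors
  nat =>0 nat, variable x_(i+1) indexed by i) to coefficients.  The ring
  S = k[x_1..x_n] consists of those using only variables with index < n.\<close>

type_synonym 'a mpoly = "(nat \<Rightarrow>\<^sub>0 nat) \<Rightarrow>\<^sub>0 'a"

definition total_deg :: "(nat \<Rightarrow>\<^sub>0 nat) \<Rightarrow> nat" where
  "total_deg a = (\<Sum>i\<in>Poly_Mapping.keys a. Poly_Mapping.lookup a i)"

definition T :: "nat \<Rightarrow> nat \<Rightarrow> (nat \<Rightarrow>\<^sub>0 nat) set" where
  "T n d = {a. Poly_Mapping.keys a \<subseteq> {..<n} \<and> total_deg a = d}"

definition monom :: "(nat \<Rightarrow>\<^sub>0 nat) \<Rightarrow> 'a::field mpoly" where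
  "monom a = Poly_Mapping.single a 1"

inductive_set subalg :: "'a::field mpoly set \<Rightarrow> 'a mpoly set" for G where
  const: "Poly_Mapping.single 0 c \<in> subalg G"
| gen: "g \<in> G \<Longrightarrow> g \<in> subalg G"
| add: "p \<in> subalg G \<Longrightarrow> q \<in> subalg G \<Longrightarrow> p + q \<in> subalg G"
| mult: "p \<in> subalg G \<Longrightarrow> q \<in> subalg G \<Longrightarrow> p * q \<in> subalg G"

definition veronese :: "nat \<Rightarrow> nat \<Rightarrow> 'a::field mpoly set" where
  "veronese n d = subalg (monom ` T n d)"

definition pinched_veronese :: "nat \<Rightarrow> nat \<Rightarrow> (nat \<Rightarrow>\<^sub>0 nat) \<Rightarrow> 'a::field mpoly set" where
  "pinched_veronese n d m = subalg (monom ` (T n d - {m}))"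

end

theory Submission
  imports Defs
begin

lemma subalg_mono: "G \<subseteq> H \<Longrightarrow> subalg G \<subseteq> subalg H"
proof
  fix x assume GH: "G \<subseteq> H" and x: "x \<in> subalg G"
  from x show "x \<in> subalg H"
    by (induction x rule: subalg.induct) (use GH in \<open>auto intro: subalg.intros\<close>)
qed

lemma subalg_zero: "0 \<in> subalg G"
  using subalg.const[of 0 G] by simp

lemma subalg_one: "1 \<in> subalg G"
  using subalg.const[of 1 G] by simp

lemma subalg_diff: "p \<in> subalg G \<Longrightarrow> q \<in> subalg G \<Longrightarrow> p - q \<in> subalg G"
proof -
  assume p: "p \<in> subalg G" and q: "q \<in> subalg G"
  have "Poly_Mapping.single 0 (-1) * q \<in> subalg G"
    by (rule subalg.mult[OF subalg.const q])
  moreover have "Poly_Mapping.single 0 (-1) * q = - q"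
    by (simp add: single_uminus)
  ultimately show ?thesis using subalg.add[OF p, of "-q"] by simp
qed

lemma total_deg_sum:
  assumes "finite S" "Poly_Mapping.keys a \<subseteq> S"
  shows "total_deg a = (\<Sum>i\<in>S. Poly_Mapping.lookup a i)"
  unfolding total_deg_def
  by (rule sum.mono_neutral_left) (use assms in \<open>auto simp: in_keys_iff\<close>)

lemma total_deg_add: "total_deg (x + y) = total_deg x + total_deg y"
proof -
  let ?S = "Poly_Mapping.keys x \<union> Poly_Mapping.keys y"
  have f: "finite ?S" by simp
  have "total_deg (x + y) = (\<Sum>i\<in>?S. Poly_Mapping.lookup (x+y) i)"
    by (rule total_deg_sum[OF f keys_add])
  also have "\<dots> = (\<Sum>i\<in>?S. Poly_Mapping.lookup x i) + (\<Sum>i\<in>?S. Poly_Mapping.lookup y i)"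
    by (simp add: lookup_add sum.distrib)
  also have "\<dots> = total_deg x + total_deg y"
    using total_deg_sum[OF f, of x] total_deg_sum[OF f, of y] by auto
  finally show ?thesis .
qed

lemma total_deg_single: "total_deg (Poly_Mapping.single i k) = k"
  unfolding total_deg_def by simp

lemma monom_mult: "(monom a :: 'a::field mpoly) * monom b = monom (a + b)"
  unfolding monom_def by (simp add: mult_single)

theorem corollary2p19:
  fixes n d :: nat and m :: "nat \<Rightarrow>\<^sub>0 nat"
  assumes "n \<ge> 2" and "d \<ge> 2"
    and "m \<in> T n d"
    and "\<forall>i. Poly_Mapping.lookup m i < d"
  shows "(pinched_veronese n d m :: 'a::field mpoly set) \<subseteq> veronese n d
    \<and> (\<forall>v \<in> (veronese n d :: 'a mpoly set).
         \<exists>p \<in> pinched_veronese n d m. v - p * monom m \<in> pinched_veronese n d m)"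
proof -
  let ?P = "pinched_veronese n d m :: 'a mpoly set"
  have sub: "?P \<subseteq> veronese n d"
    unfolding pinched_veronese_def veronese_def by (rule subalg_mono) auto
  have mT: "Poly_Mapping.keys m \<subseteq> {..<n}" "total_deg m = d"
    using assms(3) by (auto simp: T_def)
  obtain i j where ij: "i \<in> Poly_Mapping.keys m" "j \<in> Poly_Mapping.keys m" "i \<noteq> j"
  proof -
    have "Poly_Mapping.keys m \<noteq> {}"
      using mT assms(2) unfolding total_deg_def by auto
    then obtain i where i: "i \<in> Poly_Mapping.keys m" by blast
    show ?thesis
    proof (cases "Poly_Mapping.keys m = {i}")
      case True
      then have "total_deg m = Poly_Mapping.lookup m i" unfolding total_deg_def by simp
      then show ?thesis using mT assms(4) by auto
    next
      case False
      then obtain j where "j \<in> Poly_Mapping.keys m" "j \<noteq> i" using i by blast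
      then show ?thesis using that i by blast
    qed
  qed
  define c where "c = m - Poly_Mapping.single i 1 - Poly_Mapping.single j 1"
  have mi: "Poly_Mapping.lookup m i \<ge> 1" and mj: "Poly_Mapping.lookup m j \<ge> 1"
    using ij by (auto simp: in_keys_iff)
  have mc: "m = c + Poly_Mapping.single i 1 + Poly_Mapping.single j 1"
    by (rule poly_mapping_eqI)
      (use mi mj ij(3) in \<open>auto simp: c_def lookup_add lookup_minus lookup_single when_def\<close>)
  define a where "a = c + Poly_Mapping.single i 2"
  define b where "b = c + Poly_Mapping.single j 2"
  have ab: "a + b = m + m"
    by (rule poly_mapping_eqI) (simp add: a_def b_def mc lookup_add lookup_single when_def)
  have keysc: "Poly_Mapping.keys c \<subseteq> {..<n}"
  proof
    fix x assume "x \<in> Poly_Mapping.keys c"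
    then have "x \<in> Poly_Mapping.keys m"
      by (auto simp: in_keys_iff mc lookup_add)
    then show "x \<in> {..<n}" using mT by auto
  qed
  have iin: "i < n" and jin: "j < n" using ij mT by auto
  have degc: "total_deg c + 2 = d"
    using mT(2) by (simp add: mc total_deg_add total_deg_single)
  have aT: "a \<in> T n d - {m}"
  proof -
    have "Poly_Mapping.keys a \<subseteq> {..<n}"
      using keys_add[of c "Poly_Mapping.single i 2"] keysc iin by (auto simp: a_def)
    moreover have "total_deg a = d" using degc by (simp add: a_def total_deg_add total_deg_single)
    moreover have "a \<noteq> m"
    proof
      assume "a = m"
      then have "Poly_Mapping.lookup a i = Poly_Mapping.lookup m i" by simp
      then show False using ij(3) by (simp add: a_def mc lookup_add lookup_single)
    qed
    ultimately show ?thesis by (auto simp: T_def)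
  qed
  have bT: "b \<in> T n d - {m}"
  proof -
    have "Poly_Mapping.keys b \<subseteq> {..<n}"
      using keys_add[of c "Poly_Mapping.single j 2"] keysc jin by (auto simp: b_def)
    moreover have "total_deg b = d" using degc by (simp add: b_def total_deg_add total_deg_single)
    moreover have "b \<noteq> m"
    proof
      assume "b = m"
      then have "Poly_Mapping.lookup b j = Poly_Mapping.lookup m j" by simp
      then show False using ij(3) by (simp add: b_def mc lookup_add lookup_single)
    qed
    ultimately show ?thesis by (auto simp: T_def)
  qed
  have sq: "monom m * monom m \<in> ?P"
  proof -
    have "monom a * monom b \<in> ?P"
      unfolding pinched_veronese_def
      by (rule subalg.mult; rule subalg.gen) (use aT bT in auto)
    then show ?thesis by (simp add: monom_mult ab)
  qed
  have main: "\<exists>p\<in>?P. \<exists>q\<in>?P. v = p * monom m + q" if "v \<in> veronese n d" for v :: "'a mpoly"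
    using that unfolding veronese_def
  proof (induction rule: subalg.induct)
    case (const c)
    then show ?case
      by (intro bexI[of _ 0] bexI[of _ "Poly_Mapping.single 0 c"])
        (auto simp: pinched_veronese_def intro: subalg.const subalg_zero)
  next
    case (gen g)
    then obtain t where t: "t \<in> T n d" "g = monom t" by auto
    show ?case
    proof (cases "t = m")
      case True
      then show ?thesis using t
        by (intro bexI[of _ 1] bexI[of _ 0]) (auto simp: pinched_veronese_def subalg_one subalg_zero)
    next
      case False
      then have "g \<in> ?P" using t unfolding pinched_veronese_def by (auto intro: subalg.gen)
      then show ?thesis
        by (intro bexI[of _ 0] bexI[of _ g]) (auto simp: pinched_veronese_def subalg_zero)
    qed
  next
    case (add p q)
    then obtain p1 q1 p2 q2 where h: "p1 \<in> ?P" "q1 \<in> ?P" "p2 \<in> ?P" "q2 \<in> ?P"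
      "p = p1 * monom m + q1" "q = p2 * monom m + q2" by blast
    show ?case
      by (rule bexI[of _ "p1 + p2"], rule bexI[of _ "q1 + q2"])
        (use h in \<open>auto simp: pinched_veronese_def algebra_simps intro: subalg.add\<close>)
  next
    case (mult p q)
    then obtain p1 q1 p2 q2 where h: "p1 \<in> ?P" "q1 \<in> ?P" "p2 \<in> ?P" "q2 \<in> ?P"
      "p = p1 * monom m + q1" "q = p2 * monom m + q2" by blast
    have e: "p * q = (p1 * q2 + q1 * p2) * monom m + (p1 * p2 * (monom m * monom m) + q1 * q2)"
      by (simp add: h(5,6) algebra_simps)
    show ?case
      by (rule bexI[of _ "p1 * q2 + q1 * p2"], rule bexI[of _ "p1 * p2 * (monom m * monom m) + q1 * q2"])
        (use h sq e in \<open>auto simp: pinched_veronese_def intro!: subalg.add subalg.mult\<close>)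
  qed
  show ?thesis
  proof (intro conjI sub ballI)
    fix v :: "'a mpoly" assume "v \<in> veronese n d"
    then obtain p q where "p \<in> ?P" "q \<in> ?P" "v = p * monom m + q" using main by blast
    then show "\<exists>p\<in>?P. v - p * monom m \<in> ?P" by (intro bexI[of _ p]) auto
  qed
qed

end
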